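(* Let $(X,\mathsf{d}_X)$ be a compact metric space, $\mathfrak{A}$ a unital C*-algebra, and $\varphi$ a state of $C(X,\mathfrak{A})$. Let $\|\cdot\|_{\mathsf{n}}$ be a norm on $\mathfrak{A}$ (over $\mathbb{R}$ or $\mathbb{C}$) with $M,N>0$ such that $M\|\cdot\|_{\mathsf{n}}\le\|\cdot\|_{\mathfrak{A}}\le N\|\cdot\|_{\mathsf{n}}$. Let $\mathcal{S}$ denote the state space of $C(X,\mathfrak{A})$. Then: (1)(a) if $q=C(X)$, then $\sup_{\mu,\nu\in\mathcal{S}}\mathrm{mk}_{\mathsf{L}^{(\mathsf{n}),q}_{\mathsf{d}_X}}(\mu,\nu)\le 2+N\cdot\mathrm{diam}(X,\mathsf{d}_X)$; (1)(b) if $q=C(X)$ and $\mathfrak{A}=\mathbb{C}$, then $\sup_{\mu,\nu\in\mathcal{S}}\mathrm{mk}_{\mathsf{L}^{(\mathsf{n}),q}_{\mathsf{d}_X}}(\mu,\nu)\le N\cdot\mathrm{diam}(X,\mathsf{d}_X)$; (2) if $q=\mathbb{C}$ or $q=\varphi$, then $\sup_{\mu,\nu\in\mathcal{S}}\mathrm{mk}_{\mathsf{L}^{(\mathsf{n}),q}_{\mathsf{d}_X}}(\mu,\nu)\le 2$.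
   Context: $C(X,\mathfrak{A})$ is the unital C*-algebra of continuous $\mathfrak{A}$-valued functions on $X$ (pointwise operations, supremum norm, unit constant $1_{\mathfrak{A}}$); $C(X,\mathbb{C}1_{\mathfrak{A}})$ is the subalgebra of functions with values in $\mathbb{C}1_{\mathfrak{A}}$. For $a\in C(X,\mathfrak{A})$, $l^{(\mathsf{n})}_{\mathsf{d}_X}(a)=\sup_{x\ne y}\|a(x)-a(y)\|_{\mathsf{n}}/\mathsf{d}_X(x,y)$; $\mathsf{L}^{(\mathsf{n}),C(X)}_{\mathsf{d}_X}(a)=\max\{l^{(\mathsf{n})}_{\mathsf{d}_X}(a),\inf_{b\in C(X,\mathbb{C}1_{\mathfrak{A}})}\|a-b\|\}$, $\mathsf{L}^{(\mathsf{n}),\mathbb{C}}_{\mathsf{d}_X}(a)=\max\{l^{(\mathsf{n})}_{\mathsf{d}_X}(a),\inf_{\lambda\in\mathbb{C}}\|a-\lambda1\|\}$, $\mathsf{L}^{(\mathsf{n}),\varphi}_{\mathsf{d}_X}(a)=\max\{l^{(\mathsf{n})}_{\mathsf{d}_X}(a),\|a-\varphi(a)1\|\}$ (supremum norms). For a seminorm $\mathsf{L}$ and states $\mu,\nu$, $\mathrm{mk}_{\mathsf{L}}(\mu,\nu)=\sup\{|\mu(a)-\nu(a)|: a=a^*,\ \mathsf{L}(a)\le1\}$. $\mathrm{diam}(X,\mathsf{d}_X)=\sup_{x,y}\mathsf{d}_X(x,y)$. *)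

theory Defs
  imports "HOL-Analysis.Analysis"
begin

class cstar_algebra = real_normed_algebra_1 + banach +
  fixes cscale :: "complex \<Rightarrow> 'a \<Rightarrow> 'a"
    and star :: "'a \<Rightarrow> 'a"
  assumes cscale_add_left: "cscale (a + b) x = cscale a x + cscale b x"
    and cscale_add_right: "cscale a (x + y) = cscale a x + cscale a y"
    and cscale_cscale: "cscale a (cscale b x) = cscale (a * b) x"
    and cscale_one: "cscale 1 x = x"
    and cscale_of_real: "cscale (complex_of_real r) x = scaleR r x"
    and cscale_mult_left: "cscale a x * y = cscale a (x * y)"
    and cscale_mult_right: "x * cscale a y = cscale a (x * y)"
    and norm_cscale: "norm (cscale a x) = cmod a * norm x"
    and star_star: "star (star x) = x"
    and star_add: "star (x + y) = star x + star y"
    and star_cscale: "star (cscale a x) = cscale (cnj a) (star x)"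
    and star_mult: "star (x * y) = star y * star x"
    and cstar_identity: "norm (star x * x) = (norm x)\<^sup>2"

section \<open>The algebra C(X, A) for a compact metric space X (the whole type 'x)\<close>

definition supnorm :: "('x::metric_space \<Rightarrow> 'a::cstar_algebra) \<Rightarrow> real" where
  "supnorm f = (SUP x. norm (f x))"

definition fstar :: "('x \<Rightarrow> 'a::cstar_algebra) \<Rightarrow> 'x \<Rightarrow> 'a" where
  "fstar f = (\<lambda>x. star (f x))"

definition fcscale :: "complex \<Rightarrow> ('x \<Rightarrow> 'a::cstar_algebra) \<Rightarrow> 'x \<Rightarrow> 'a" where
  "fcscale c f = (\<lambda>x. cscale c (f x))"

definition is_state :: "(('x::metric_space \<Rightarrow> 'a::cstar_algebra) \<Rightarrow> complex) \<Rightarrow> bool" where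
  "is_state \<phi> \<longleftrightarrow>
     (\<forall>f g. continuous_on UNIV f \<longrightarrow> continuous_on UNIV g \<longrightarrow> \<phi> (\<lambda>x. f x + g x) = \<phi> f + \<phi> g) \<and>
     (\<forall>c f. continuous_on UNIV f \<longrightarrow> \<phi> (fcscale c f) = c * \<phi> f) \<and>
     (\<forall>g. continuous_on UNIV g \<longrightarrow>
          Im (\<phi> (\<lambda>x. star (g x) * g x)) = 0 \<and> Re (\<phi> (\<lambda>x. star (g x) * g x)) \<ge> 0) \<and>
     \<phi> (\<lambda>x. 1) = 1"

definition lip_n :: "('a \<Rightarrow> real) \<Rightarrow> ('x::metric_space \<Rightarrow> 'a::cstar_algebra) \<Rightarrow> ereal" where
  "lip_n nn a = (SUP p \<in> {(x, y). x \<noteq> y}. ereal (nn (a (fst p) - a (snd p)) / dist (fst p) (snd p)))"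

definition scalar_fun_set :: "('x::metric_space \<Rightarrow> 'a::cstar_algebra) set" where
  "scalar_fun_set = {b. continuous_on UNIV b \<and> (\<forall>x. b x \<in> range (\<lambda>c. cscale c 1))}"

definition L_CX :: "('a \<Rightarrow> real) \<Rightarrow> ('x::metric_space \<Rightarrow> 'a::cstar_algebra) \<Rightarrow> ereal" where
  "L_CX nn a = max (lip_n nn a) (ereal (Inf ((\<lambda>b. supnorm (\<lambda>x. a x - b x)) ` scalar_fun_set)))"

definition L_C :: "('a \<Rightarrow> real) \<Rightarrow> ('x::metric_space \<Rightarrow> 'a::cstar_algebra) \<Rightarrow> ereal" where
  "L_C nn a = max (lip_n nn a) (ereal (Inf ((\<lambda>c. supnorm (\<lambda>x. a x - cscale c 1)) ` UNIV)))"

definition L_phi :: "('a \<Rightarrow> real) \<Rightarrow> (('x::metric_space \<Rightarrow> 'a) \<Rightarrow> complex)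
    \<Rightarrow> ('x \<Rightarrow> 'a::cstar_algebra) \<Rightarrow> ereal" where
  "L_phi nn \<phi> a = max (lip_n nn a) (ereal (supnorm (\<lambda>x. a x - cscale (\<phi> a) 1)))"

definition mk :: "(('x::metric_space \<Rightarrow> 'a::cstar_algebra) \<Rightarrow> ereal)
    \<Rightarrow> (('x \<Rightarrow> 'a) \<Rightarrow> complex) \<Rightarrow> (('x \<Rightarrow> 'a) \<Rightarrow> complex) \<Rightarrow> ereal" where
  "mk L \<mu> \<nu> = (SUP a \<in> {a. continuous_on UNIV a \<and> fstar a = a \<and> L a \<le> 1}.
                  ereal (cmod (\<mu> a - \<nu> a)))"

text \<open>A norm on A (over the reals; a complex norm is in particular a real norm).\<close>

definition is_norm_on :: "('a::real_vector \<Rightarrow> real) \<Rightarrow> bool" where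
  "is_norm_on nn \<longleftrightarrow> (\<forall>x. nn x \<ge> 0) \<and> (\<forall>x. nn x = 0 \<longleftrightarrow> x = 0) \<and>
     (\<forall>x y. nn (x + y) \<le> nn x + nn y) \<and> (\<forall>r x. nn (scaleR r x) = \<bar>r\<bar> * nn x)"

definition diam_X :: "'x::metric_space itself \<Rightarrow> real" where
  "diam_X _ = (SUP p \<in> (UNIV :: ('x \<times> 'x) set). dist (fst p) (snd p))"

end

theory Submission
  imports Defs "HOL-Computational_Algebra.Formal_Power_Series"
begin

definition dco :: "nat \<Rightarrow> real" where "dco n = ((1/2::real) gchoose n) * (-1)^n"

lemma one_gchoose: "(1::real) gchoose n = (if n = 0 then 1 else if n = 1 then 1 else 0)"
proof -
  have "(1::real) gchoose n = of_nat (1 choose n)"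
    by (metis binomial_gbinomial of_nat_1)
  also have "\<dots> = (if n = 0 then 1 else if n = 1 then 1 else 0)"
    by (cases n) (auto simp: binomial_eq_0)
  finally show ?thesis .
qed

lemma dco_conv: "(\<Sum>i\<le>n. dco i * dco (n - i)) = (if n = 0 then 1 else if n = 1 then -1 else 0)"
proof -
  have "(\<Sum>i\<le>n. dco i * dco (n - i)) = (\<Sum>i\<le>n. ((1/2::real) gchoose i) * ((1/2) gchoose (n - i)) * (-1)^n)"
  proof (rule sum.cong)
    fix i assume "i \<in> {..n}"
    then have "(-1::real)^i * (-1)^(n-i) = (-1)^n" by (simp add: power_add[symmetric])
    then show "dco i * dco (n - i) = ((1/2::real) gchoose i) * ((1/2) gchoose (n - i)) * (-1)^n"
      unfolding dco_def by (metis (no_types, lifting) mult.assoc mult.left_commute)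
  qed simp
  also have "\<dots> = (\<Sum>i=0..n. ((1/2::real) gchoose i) * ((1/2) gchoose (n - i))) * (-1)^n"
    by (simp add: sum_distrib_right atMost_atLeast0)
  also have "\<dots> = ((1::real) gchoose n) * (-1)^n"
    using gbinomial_Vandermonde[of "1/2::real" "1/2" n] by simp
  finally show ?thesis by (simp add: one_gchoose)
qed

lemma dco_summable:
  assumes "0 \<le> q" "q < 1"
  shows "summable (\<lambda>n. \<bar>dco n\<bar> * q ^ n)"
proof -
  define z where "z = (q + 1) / 2"
  have z: "q < z" "z < 1" using assms by (auto simp: z_def)
  have "summable (\<lambda>n. ((1/2::real) gchoose n) * z ^ n)"
    using gen_binomial_real[of z "1/2"] z assms sums_summable by fastforce
  then have "summable (\<lambda>n. norm (((1/2::real) gchoose n) * q ^ n))"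
    by (rule powser_insidea) (use z assms in auto)
  then show ?thesis
    by (simp add: dco_def abs_mult power_abs assms)
qed

definition sqS :: "'a::{real_normed_algebra_1,banach} \<Rightarrow> 'a" where
  "sqS v = (\<Sum>n. dco n *\<^sub>R v ^ n)"

lemma sqS_summable:
  fixes v :: "'a::{real_normed_algebra_1,banach}"
  assumes "norm v \<le> q" "q < 1"
  shows "summable (\<lambda>n. norm (dco n *\<^sub>R v ^ n))"
proof (rule summable_comparison_test')
  have q0: "0 \<le> q" using assms(1) norm_ge_zero order_trans by blast
  show "summable (\<lambda>n. \<bar>dco n\<bar> * q ^ n)" by (rule dco_summable[OF q0 assms(2)])
  fix n :: nat
  have "norm (v ^ n) \<le> q ^ n"
    using norm_power_ineq[of v n] power_mono[OF assms(1), of n] by simp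
  then show "norm (norm (dco n *\<^sub>R v ^ n)) \<le> \<bar>dco n\<bar> * q ^ n"
    by (simp add: mult_left_mono)
qed

lemma sqS_sq:
  fixes v :: "'a::{real_normed_algebra_1,banach}"
  assumes "norm v < 1"
  shows "sqS v * sqS v = 1 - v"
proof -
  have s: "summable (\<lambda>n. norm (dco n *\<^sub>R v ^ n))"
    using sqS_summable[of v "norm v"] assms by simp
  have "sqS v * sqS v = (\<Sum>k. \<Sum>i\<le>k. (dco i *\<^sub>R v ^ i) * (dco (k - i) *\<^sub>R v ^ (k - i)))"
    unfolding sqS_def by (rule Cauchy_product[OF s s])
  also have "\<dots> = (\<Sum>k. (\<Sum>i\<le>k. dco i * dco (k - i)) *\<^sub>R v ^ k)"
  proof -
    have "\<And>k. (\<Sum>i\<le>k. (dco i *\<^sub>R v ^ i) * (dco (k - i) *\<^sub>R v ^ (k - i)))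
             = (\<Sum>i\<le>k. dco i * dco (k - i)) *\<^sub>R v ^ k"
    proof -
      fix k
      have "\<And>i. i \<in> {..k} \<Longrightarrow> (dco i *\<^sub>R v ^ i) * (dco (k - i) *\<^sub>R v ^ (k - i))
              = (dco i * dco (k - i)) *\<^sub>R v ^ k"
        by (simp add: power_add[symmetric])
      then show "(\<Sum>i\<le>k. (dco i *\<^sub>R v ^ i) * (dco (k - i) *\<^sub>R v ^ (k - i)))
             = (\<Sum>i\<le>k. dco i * dco (k - i)) *\<^sub>R v ^ k"
        by (simp add: scaleR_sum_left)
    qed
    then show ?thesis by simp
  qed
  also have "\<dots> = (\<Sum>k\<in>{0,1}. (\<Sum>i\<le>k. dco i * dco (k - i)) *\<^sub>R v ^ k)"
    by (rule suminf_finite) (auto simp: dco_conv)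
  also have "\<dots> = 1 - v" by (simp add: dco_conv)
  finally show ?thesis .
qed


lemma star_zero: "star (0::'a::cstar_algebra) = 0"
  using star_add[of 0 0] by simp

lemma star_scaleR: "star (scaleR r (x::'a::cstar_algebra)) = scaleR r (star x)"
  using star_cscale[of "complex_of_real r" x] by (simp add: cscale_of_real[symmetric])

lemma star_minus: "star (- (x::'a::cstar_algebra)) = - star x"
proof -
  have "star ((-1) *\<^sub>R x) = (-1) *\<^sub>R star x" by (rule star_scaleR)
  then show ?thesis by (metis scaleR_minus1_left)
qed

lemma star_diff: "star ((x::'a::cstar_algebra) - y) = star x - star y"
  using star_add[of x "- y"] star_minus[of y] by simp

lemma star_one: "star (1::'a::cstar_algebra) = 1"
proof -
  have "star 1 = star 1 * star (star 1)" by (simp only: star_star mult_1_right)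
  also have "\<dots> = star (star 1 * 1)" by (rule star_mult[symmetric])
  also have "\<dots> = 1" by (simp add: star_star)
  finally show ?thesis .
qed

lemma star_power: "star ((x::'a::cstar_algebra) ^ n) = (star x) ^ n"
proof (induction n)
  case 0 then show ?case by (simp add: star_one)
next
  case (Suc n)
  have "star (x ^ Suc n) = star (x * x ^ n)" by simp
  also have "\<dots> = (star x) ^ n * star x" by (simp add: star_mult Suc)
  also have "\<dots> = star x ^ Suc n" by (simp add: power_commutes)
  finally show ?case .
qed

lemma norm_star_le: "norm (x::'a::cstar_algebra) \<le> norm (star x)"
proof (cases "norm x = 0")
  case True then show ?thesis by simp
next
  case False
  have "(norm x)^2 \<le> norm (star x) * norm x"
    using cstar_identity[of x] norm_mult_ineq[of "star x" x] by simp
  then have "norm x * norm x \<le> norm (star x) * norm x" by (simp add: power2_eq_square)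
  moreover have "0 < norm x" using False by simp
  ultimately show ?thesis using mult_right_le_imp_le by blast
qed

lemma norm_star: "norm (star x) = norm (x::'a::cstar_algebra)"
  using norm_star_le[of x] norm_star_le[of "star x"] by (simp add: star_star)

lemma bounded_linear_star: "bounded_linear (star :: 'a::cstar_algebra \<Rightarrow> 'a)"
  by (rule bounded_linear_intro[where K=1]) (auto simp: star_add star_scaleR norm_star)

lemma star_sqS:
  fixes v :: "'a::cstar_algebra"
  assumes "star v = v" "norm v < 1"
  shows "star (sqS v) = sqS v"
proof -
  have "summable (\<lambda>n. norm (dco n *\<^sub>R v ^ n))"
    by (rule sqS_summable[of v "norm v"]) (use assms in auto)
  then have "summable (\<lambda>n. dco n *\<^sub>R v ^ n)" by (rule summable_norm_cancel)
  then have "star (sqS v) = (\<Sum>n. star (dco n *\<^sub>R v ^ n))"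
    unfolding sqS_def by (rule bounded_linear.suminf[OF bounded_linear_star])
  also have "\<dots> = sqS v" unfolding sqS_def by (simp add: star_scaleR star_power assms)
  finally show ?thesis .
qed

lemma cscale_real: "cscale (complex_of_real r) (x::'a::cstar_algebra) = r *\<^sub>R x"
  by (rule cscale_of_real)

lemma state_const:
  fixes \<mu> :: "('x::metric_space \<Rightarrow> 'a::cstar_algebra) \<Rightarrow> complex"
  assumes "is_state \<mu>"
  shows "\<mu> (\<lambda>x. cscale c 1) = c"
proof -
  have "\<mu> (fcscale c (\<lambda>x. 1)) = c * \<mu> (\<lambda>x. 1)"
  proof -
    have "continuous_on UNIV (\<lambda>x::'x. 1::'a)" by simp
    then show ?thesis using assms unfolding is_state_def by blast
  qed
  then show ?thesis using assms unfolding is_state_def fcscale_def by simp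
qed

lemma state_add:
  fixes \<mu> :: "('x::metric_space \<Rightarrow> 'a::cstar_algebra) \<Rightarrow> complex"
  assumes "is_state \<mu>" "continuous_on UNIV f" "continuous_on UNIV g"
  shows "\<mu> (\<lambda>x. f x + g x) = \<mu> f + \<mu> g"
  using assms unfolding is_state_def by blast

lemma state_diff:
  fixes \<mu> :: "('x::metric_space \<Rightarrow> 'a::cstar_algebra) \<Rightarrow> complex"
  assumes "is_state \<mu>" "continuous_on UNIV f" "continuous_on UNIV g"
  shows "\<mu> (\<lambda>x. f x - g x) = \<mu> f - \<mu> g"
proof -
  have m1: "cscale (-1) v = - v" for v :: 'a
  proof -
    have "cscale (complex_of_real (-1)) v = (-1) *\<^sub>R v" by (rule cscale_of_real)
    then show ?thesis by simp
  qed
  have eq: "fcscale (-1) g = (\<lambda>x. - g x)"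
    unfolding fcscale_def by (simp add: fun_eq_iff m1)
  have cg: "continuous_on UNIV (\<lambda>x. - g x)" using assms(3) by (intro continuous_intros)
  have "\<mu> (\<lambda>x. - g x) = - \<mu> g"
    using assms(1,3) eq unfolding is_state_def by (metis mult_minus1)
  moreover have "\<mu> (\<lambda>x. f x + - g x) = \<mu> f + \<mu> (\<lambda>x. - g x)"
    by (rule state_add[OF assms(1,2) cg])
  ultimately show ?thesis by simp
qed

lemma state_pos:
  fixes \<mu> :: "('x::metric_space \<Rightarrow> 'a::cstar_algebra) \<Rightarrow> complex"
  assumes st: "is_state \<mu>" and ck: "continuous_on UNIV k" and sa: "\<And>x. star (k x) = k x"
    and R: "R \<ge> 0" and nk: "\<And>x. norm (R *\<^sub>R 1 - k x) \<le> R"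
  shows "Im (\<mu> k) = 0 \<and> 0 \<le> Re (\<mu> k)"
proof -
  have main: "Im (\<mu> k) = 0 \<and> - \<delta> \<le> Re (\<mu> k)" if d: "\<delta> > 0" for \<delta>
  proof -
    define R' where "R' = R + \<delta>"
    have R'0: "R' > 0" using R d by (simp add: R'_def)
    define q where "q = R / R'"
    have q1: "q < 1" "0 \<le> q" using R d R'0 by (auto simp: q_def R'_def)
    define w where "w x = (1 / R') *\<^sub>R (R *\<^sub>R 1 - k x)" for x
    have nw: "norm (w x) \<le> q" for x
      using nk[of x] R'0 by (simp add: w_def q_def divide_right_mono)
    have nw1: "norm (w x) < 1" for x using nw[of x] q1 by linarith
    have cw: "continuous_on UNIV w" unfolding w_def using ck by (intro continuous_intros)
    have sw: "star (w x) = w x" for x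
      by (simp add: w_def star_scaleR star_diff star_one sa)
    define s where "s x = sqS (w x)" for x
    have cs: "continuous_on UNIV s"
    proof -
      have ul: "uniform_limit UNIV (\<lambda>n x. \<Sum>i<n. dco i *\<^sub>R (w x) ^ i) (\<lambda>x. suminf (\<lambda>i. dco i *\<^sub>R (w x) ^ i)) sequentially"
      proof (rule Weierstrass_m_test)
        show "summable (\<lambda>n. \<bar>dco n\<bar> * q ^ n)" by (rule dco_summable[OF q1(2) q1(1)])
        fix n x
        have "norm (w x ^ n) \<le> q ^ n"
          using norm_power_ineq[of "w x" n] power_mono[OF nw[of x], of n] by simp
        then show "norm (dco n *\<^sub>R w x ^ n) \<le> \<bar>dco n\<bar> * q ^ n"
          by (simp add: mult_left_mono)
      qed
      have "continuous_on UNIV (\<lambda>x. suminf (\<lambda>i. dco i *\<^sub>R (w x) ^ i))"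
        by (rule uniform_limit_theorem[OF _ ul]) (auto intro!: always_eventually continuous_intros cw)
      then show ?thesis unfolding s_def sqS_def .
    qed
    define y where "y x = sqrt R' *\<^sub>R s x" for x
    have cy: "continuous_on UNIV y" unfolding y_def using cs by (intro continuous_intros)
    have yy: "star (y x) * y x = k x + cscale (complex_of_real \<delta>) 1" for x
    proof -
      have "star (y x) * y x = (sqrt R' * sqrt R') *\<^sub>R (s x * s x)"
        using star_sqS[OF sw nw1] by (simp add: y_def s_def star_scaleR)
      also have "\<dots> = R' *\<^sub>R (1 - w x)"
        using R'0 sqS_sq[OF nw1] by (simp add: s_def)
      also have "\<dots> = R' *\<^sub>R 1 - R' *\<^sub>R w x" by (simp add: scaleR_diff_right)
      also have "R' *\<^sub>R w x = R *\<^sub>R 1 - k x" using R'0 by (simp add: w_def)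
      also have "R' *\<^sub>R 1 - (R *\<^sub>R 1 - k x) = k x + \<delta> *\<^sub>R (1::'a)"
        by (simp add: R'_def algebra_simps)
      finally show ?thesis by (simp add: cscale_real)
    qed
    have "Im (\<mu> (\<lambda>x. star (y x) * y x)) = 0 \<and> Re (\<mu> (\<lambda>x. star (y x) * y x)) \<ge> 0"
      using st cy unfolding is_state_def by blast
    moreover have "\<mu> (\<lambda>x. star (y x) * y x) = \<mu> k + complex_of_real \<delta>"
    proof -
      have "\<mu> (\<lambda>x. star (y x) * y x) = \<mu> (\<lambda>x. k x + cscale (complex_of_real \<delta>) 1)"
        using yy by simp
      also have "\<dots> = \<mu> k + \<mu> (\<lambda>x. cscale (complex_of_real \<delta>) 1)"
        by (rule state_add[OF st ck]) (intro continuous_intros)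
      finally show ?thesis using state_const[OF st] by simp
    qed
    ultimately show ?thesis by simp
  qed
  have "Im (\<mu> k) = 0" using main[of 1] by simp
  moreover have "0 \<le> Re (\<mu> k)"
  proof (rule ccontr)
    assume "\<not> 0 \<le> Re (\<mu> k)"
    then show False using main[of "- Re (\<mu> k) / 2"] by simp
  qed
  ultimately show ?thesis by simp
qed


lemma state_interval:
  fixes \<mu> :: "('x::metric_space \<Rightarrow> 'a::cstar_algebra) \<Rightarrow> complex"
  assumes st: "is_state \<mu>" and ca: "continuous_on UNIV a" and sa: "\<And>x. star (a x) = a x"
    and R: "R \<ge> 0"
    and hi: "\<And>x. norm (R *\<^sub>R 1 - (mh *\<^sub>R 1 - a x)) \<le> R"
    and lo: "\<And>x. norm (R *\<^sub>R 1 - (a x - ml *\<^sub>R 1)) \<le> R"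
  shows "Im (\<mu> a) = 0 \<and> ml \<le> Re (\<mu> a) \<and> Re (\<mu> a) \<le> mh"
proof -
  have cc: "continuous_on UNIV (\<lambda>x::'x. cscale c (1::'a))" for c by simp
  have e1: "(\<lambda>x. mh *\<^sub>R 1 - a x) = (\<lambda>x. cscale (complex_of_real mh) 1 - a x)"
    by (simp add: cscale_real)
  have e2: "(\<lambda>x. a x - ml *\<^sub>R 1) = (\<lambda>x. a x - cscale (complex_of_real ml) 1)"
    by (simp add: cscale_real)
  have p1: "Im (\<mu> (\<lambda>x. mh *\<^sub>R 1 - a x)) = 0 \<and> 0 \<le> Re (\<mu> (\<lambda>x. mh *\<^sub>R 1 - a x))"
    by (rule state_pos[OF st _ _ R hi]) (auto intro!: continuous_intros ca simp: star_diff star_scaleR star_one sa)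
  have p2: "Im (\<mu> (\<lambda>x. a x - ml *\<^sub>R 1)) = 0 \<and> 0 \<le> Re (\<mu> (\<lambda>x. a x - ml *\<^sub>R 1))"
    by (rule state_pos[OF st _ _ R lo]) (auto intro!: continuous_intros ca simp: star_diff star_scaleR star_one sa)
  have q1: "\<mu> (\<lambda>x. mh *\<^sub>R 1 - a x) = complex_of_real mh - \<mu> a"
    unfolding e1 by (simp add: state_diff[OF st cc ca] state_const[OF st])
  have q2: "\<mu> (\<lambda>x. a x - ml *\<^sub>R 1) = \<mu> a - complex_of_real ml"
    unfolding e2 by (simp add: state_diff[OF st ca cc] state_const[OF st])
  show ?thesis using p1 p2 unfolding q1 q2 by simp
qed

lemma state_diff_bound:
  fixes \<mu> \<nu> :: "('x::metric_space \<Rightarrow> 'a::cstar_algebra) \<Rightarrow> complex"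
  assumes st: "is_state \<mu>" "is_state \<nu>" and ca: "continuous_on UNIV a" and sa: "\<And>x. star (a x) = a x"
    and R: "R \<ge> 0"
    and hi: "\<And>x. norm (R *\<^sub>R 1 - (mh *\<^sub>R 1 - a x)) \<le> R"
    and lo: "\<And>x. norm (R *\<^sub>R 1 - (a x - ml *\<^sub>R 1)) \<le> R"
  shows "cmod (\<mu> a - \<nu> a) \<le> mh - ml"
proof -
  have A: "Im (\<mu> a) = 0 \<and> ml \<le> Re (\<mu> a) \<and> Re (\<mu> a) \<le> mh"
    by (rule state_interval[OF st(1) ca sa R hi lo])
  have B: "Im (\<nu> a) = 0 \<and> ml \<le> Re (\<nu> a) \<and> Re (\<nu> a) \<le> mh"
    by (rule state_interval[OF st(2) ca sa R hi lo])
  have "\<mu> a - \<nu> a = complex_of_real (Re (\<mu> a) - Re (\<nu> a))"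
    using A B by (simp add: complex_eq_iff)
  then have "cmod (\<mu> a - \<nu> a) = \<bar>Re (\<mu> a) - Re (\<nu> a)\<bar>" by (metis norm_of_real)
  then show ?thesis using A B by linarith
qed

lemma norm_sR1: "norm (r *\<^sub>R (1::'a::real_normed_algebra_1)) = \<bar>r\<bar>"
  by simp

lemma core:
  fixes \<mu> \<nu> :: "('x::metric_space \<Rightarrow> 'a::cstar_algebra) \<Rightarrow> complex"
  assumes cpt: "compact (UNIV :: 'x set)"
    and st: "is_state \<mu>" "is_state \<nu>" and ca: "continuous_on UNIV a" and sa: "\<And>x. star (a x) = a x"
    and ct: "continuous_on UNIV t"
    and rho: "\<And>x. norm (a x - t x *\<^sub>R 1) \<le> \<rho>"
    and K: "\<And>x y. norm (a x - a y) \<le> K"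
    and T: "\<And>x y. t x - t y \<le> T"
  shows "cmod (\<mu> a - \<nu> a) \<le> 2 * \<rho> + min K T"
proof -
  obtain xM where xM: "\<And>y. t y \<le> t xM" using continuous_attains_sup[OF cpt _ ct] by auto
  obtain xm where xm: "\<And>y. t xm \<le> t y" using continuous_attains_inf[OF cpt _ ct] by auto
  define osc where "osc = t xM - t xm"
  have osc0: "0 \<le> osc" using xM[of xm] by (simp add: osc_def)
  have rho0: "0 \<le> \<rho>" using rho[of xm] norm_ge_zero order_trans by blast
  have K0: "0 \<le> K" using K[of xm xm] by simp
  have oscT: "osc \<le> T" using T[of xM xm] by (simp add: osc_def)
  show ?thesis
  proof (cases "osc \<le> K")
    case True
    have "cmod (\<mu> a - \<nu> a) \<le> (t xM + \<rho>) - (t xm - \<rho>)"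
    proof (rule state_diff_bound[OF st ca sa, of "\<rho> + osc"])
      show "0 \<le> \<rho> + osc" using rho0 osc0 by simp
      fix x
      have eq: "(\<rho> + osc) *\<^sub>R 1 - ((t xM + \<rho>) *\<^sub>R 1 - a x) = (a x - t x *\<^sub>R 1) + (t x - t xm) *\<^sub>R (1::'a)"
        by (simp add: osc_def algebra_simps)
      have "norm ((a x - t x *\<^sub>R 1) + (t x - t xm) *\<^sub>R (1::'a)) \<le> \<rho> + osc"
        using norm_triangle_ineq[of "a x - t x *\<^sub>R 1" "(t x - t xm) *\<^sub>R (1::'a)"] rho[of x] xm[of x] xM[of x]
        by (simp add: osc_def)
      then show "norm ((\<rho> + osc) *\<^sub>R 1 - ((t xM + \<rho>) *\<^sub>R 1 - a x)) \<le> \<rho> + osc" by (simp only: eq)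
      have eq2: "(\<rho> + osc) *\<^sub>R 1 - (a x - (t xm - \<rho>) *\<^sub>R 1) = - (a x - t x *\<^sub>R 1) + (t xM - t x) *\<^sub>R (1::'a)"
        by (simp add: osc_def algebra_simps)
      have "norm (- (a x - t x *\<^sub>R 1) + (t xM - t x) *\<^sub>R (1::'a)) \<le> \<rho> + osc"
        using norm_triangle_ineq[of "- (a x - t x *\<^sub>R 1)" "(t xM - t x) *\<^sub>R (1::'a)"] rho[of x] xm[of x] xM[of x]
        by (simp add: osc_def norm_minus_commute)
      then show "norm ((\<rho> + osc) *\<^sub>R 1 - (a x - (t xm - \<rho>) *\<^sub>R 1)) \<le> \<rho> + osc" by (simp only: eq2)
    qed
    then show ?thesis using True oscT by (simp add: osc_def)
  next
    case False
    have "cmod (\<mu> a - \<nu> a) \<le> (t xm + \<rho> + K) - (t xM - \<rho> - K)"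
    proof (rule state_diff_bound[OF st ca sa, of "\<rho> + K"])
      show "0 \<le> \<rho> + K" using rho0 K0 by simp
      fix x
      have eq: "(\<rho> + K) *\<^sub>R 1 - ((t xm + \<rho> + K) *\<^sub>R 1 - a x) = (a x - a xm) + (a xm - t xm *\<^sub>R (1::'a))"
        by (simp add: algebra_simps)
      have "norm ((a x - a xm) + (a xm - t xm *\<^sub>R (1::'a))) \<le> \<rho> + K"
        using norm_triangle_ineq[of "a x - a xm" "a xm - t xm *\<^sub>R (1::'a)"] rho[of xm] K[of x xm] by simp
      then show "norm ((\<rho> + K) *\<^sub>R 1 - ((t xm + \<rho> + K) *\<^sub>R 1 - a x)) \<le> \<rho> + K" by (simp only: eq)
      have eq2: "(\<rho> + K) *\<^sub>R 1 - (a x - (t xM - \<rho> - K) *\<^sub>R 1) = (a xM - a x) - (a xM - t xM *\<^sub>R (1::'a))"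
        by (simp add: algebra_simps)
      have "norm ((a xM - a x) - (a xM - t xM *\<^sub>R (1::'a))) \<le> \<rho> + K"
        using norm_triangle_ineq4[of "a xM - a x" "a xM - t xM *\<^sub>R (1::'a)"] rho[of xM] K[of xM x] by simp
      then show "norm ((\<rho> + K) *\<^sub>R 1 - (a x - (t xM - \<rho> - K) *\<^sub>R 1)) \<le> \<rho> + K" by (simp only: eq2)
    qed
    then show ?thesis using False oscT by (simp add: osc_def)
  qed
qed


lemma cscale_diff_left: "cscale (c - d) (v::'a::cstar_algebra) = cscale c v - cscale d v"
  using cscale_add_left[of "c - d" d v] by (simp add: algebra_simps)

lemma re_approx:
  fixes v :: "'a::cstar_algebra"
  assumes sv: "star v = v"
  shows "norm (v - Re c *\<^sub>R 1) \<le> norm (v - cscale c 1)"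
proof -
  define u where "u = v - cscale c 1"
  have su: "star u = v - cscale (cnj c) 1"
    by (simp add: u_def star_diff star_cscale star_one sv)
  have "cscale c 1 + cscale (cnj c) 1 = cscale (complex_of_real (2 * Re c)) (1::'a)"
    by (simp only: cscale_add_left[symmetric] complex_add_cnj)
  then have "cscale c 1 + cscale (cnj c) 1 = (2 * Re c) *\<^sub>R (1::'a)" by (simp only: cscale_real)
  then have "u + star u = 2 *\<^sub>R v - (2 * Re c) *\<^sub>R (1::'a)"
    unfolding su unfolding u_def by (simp add: algebra_simps scaleR_2)
  also have "\<dots> = 2 *\<^sub>R (v - Re c *\<^sub>R 1)" by (simp add: scaleR_right_diff_distrib)
  finally have eq: "v - Re c *\<^sub>R 1 = (1/2) *\<^sub>R (u + star u)" by simp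
  have "norm ((1/2) *\<^sub>R (u + star u)) \<le> (1/2) * (norm u + norm (star u))"
    using norm_triangle_ineq[of u "star u"] by simp
  also have "\<dots> = norm u" by (simp add: norm_star)
  finally show ?thesis unfolding eq u_def .
qed

lemma supnorm_ge:
  fixes f :: "'x::metric_space \<Rightarrow> 'a::cstar_algebra"
  assumes "compact (UNIV :: 'x set)" "continuous_on UNIV f"
  shows "norm (f x) \<le> supnorm f"
proof -
  have "compact (range f)" using compact_continuous_image assms by blast
  then have "bounded (range f)" by (rule compact_imp_bounded)
  then obtain B where "\<forall>y\<in>range f. norm y \<le> B" by (auto simp: bounded_iff)
  then have "bdd_above (range (\<lambda>x. norm (f x)))" by (auto intro!: bdd_aboveI)
  then show ?thesis unfolding supnorm_def by (rule cSUP_upper[OF UNIV_I])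
qed

lemma cx_core:
  fixes \<mu> \<nu> :: "('x::metric_space \<Rightarrow> 'a::cstar_algebra) \<Rightarrow> complex"
  assumes cpt: "compact (UNIV :: 'x set)"
    and st: "is_state \<mu>" "is_state \<nu>" and ca: "continuous_on UNIV a" and sa: "\<And>x. star (a x) = a x"
    and b: "b \<in> scalar_fun_set"
    and rho: "\<And>x. norm (a x - b x) \<le> \<rho>"
    and K: "\<And>x y. norm (a x - a y) \<le> K"
  shows "cmod (\<mu> a - \<nu> a) \<le> 2 * \<rho> + K"
proof -
  have cb: "continuous_on UNIV b" using b by (simp add: scalar_fun_set_def)
  have "\<forall>x. \<exists>c. b x = cscale c 1" using b by (auto simp: scalar_fun_set_def)
  then have "\<exists>\<beta>. \<forall>x. b x = cscale (\<beta> x) 1" by (rule choice)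
  then obtain \<beta> where \<beta>: "\<And>x. b x = cscale (\<beta> x) 1" by blast
  define t where "t x = Re (\<beta> x)" for x
  have tlip: "dist (t x) (t y) \<le> dist (b x) (b y)" for x y
  proof -
    have "b x - b y = cscale (\<beta> x - \<beta> y) 1" by (simp add: \<beta> cscale_diff_left)
    then have "dist (b x) (b y) = cmod (\<beta> x - \<beta> y)" by (simp add: dist_norm norm_cscale)
    moreover have "\<bar>Re (\<beta> x - \<beta> y)\<bar> \<le> cmod (\<beta> x - \<beta> y)" by (rule abs_Re_le_cmod)
    ultimately show ?thesis by (simp add: t_def dist_real_def)
  qed
  have ct: "continuous_on UNIV t"
    unfolding continuous_on_iff
  proof (intro ballI allI impI)
    fix x and e :: real assume "0 < e"
    then obtain d where d: "d > 0" "\<forall>x'\<in>UNIV. dist x' x < d \<longrightarrow> dist (b x') (b x) < e"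
      using cb unfolding continuous_on_iff by blast
    have "\<forall>x'\<in>UNIV. dist x' x < d \<longrightarrow> dist (t x') (t x) < e"
    proof (intro ballI impI)
      fix x' assume "dist x' x < d"
      then have "dist (b x') (b x) < e" using d(2) by blast
      then show "dist (t x') (t x) < e" using tlip[of x' x] by linarith
    qed
    then show "\<exists>d>0. \<forall>x'\<in>UNIV. dist x' x < d \<longrightarrow> dist (t x') (t x) < e"
      using d(1) by blast
  qed
  have rho': "norm (a x - t x *\<^sub>R 1) \<le> \<rho>" for x
    using re_approx[OF sa[of x], of "\<beta> x"] rho[of x] by (simp add: t_def \<beta>)
  have rho0: "0 \<le> \<rho>" using rho[of undefined] norm_ge_zero order_trans by blast
  have T: "t x - t y \<le> 2 * \<rho> + K" for x y
  proof -
    have "t x - t y \<le> norm ((t x - t y) *\<^sub>R (1::'a))" by simp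
    also have "(t x - t y) *\<^sub>R (1::'a) = (t x *\<^sub>R 1 - a x) + (a x - a y) + (a y - t y *\<^sub>R 1)"
      by (simp add: algebra_simps)
    also have "norm \<dots> \<le> norm (t x *\<^sub>R 1 - a x) + norm (a x - a y) + norm (a y - t y *\<^sub>R 1)"
      using norm_triangle_ineq[of "t x *\<^sub>R 1 - a x + (a x - a y)" "a y - t y *\<^sub>R (1::'a)"]
        norm_triangle_ineq[of "t x *\<^sub>R 1 - a x" "a x - a y"] by linarith
    also have "\<dots> \<le> \<rho> + K + \<rho>"
      using rho'[of x] rho'[of y] K[of x y] norm_minus_commute[of "t x *\<^sub>R (1::'a)" "a x"] by linarith
    finally show ?thesis by simp
  qed
  have "cmod (\<mu> a - \<nu> a) \<le> 2 * \<rho> + min K (2 * \<rho> + K)"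
    by (rule core[OF cpt st ca sa ct rho' K T])
  then show ?thesis using rho0 by simp
qed

lemma c_core:
  fixes \<mu> \<nu> :: "('x::metric_space \<Rightarrow> 'a::cstar_algebra) \<Rightarrow> complex"
  assumes cpt: "compact (UNIV :: 'x set)"
    and st: "is_state \<mu>" "is_state \<nu>" and ca: "continuous_on UNIV a" and sa: "\<And>x. star (a x) = a x"
    and rho: "\<And>x. norm (a x - cscale c 1) \<le> \<rho>"
  shows "cmod (\<mu> a - \<nu> a) \<le> 2 * \<rho>"
proof -
  have rho': "norm (a x - Re c *\<^sub>R 1) \<le> \<rho>" for x
    using re_approx[OF sa[of x], of c] rho[of x] by simp
  have K: "norm (a x - a y) \<le> 2 * \<rho>" for x y
  proof -
    have "norm (a x - a y) \<le> norm (a x - Re c *\<^sub>R 1) + norm (a y - Re c *\<^sub>R (1::'a))"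
      using norm_triangle_ineq4[of "a x - Re c *\<^sub>R 1" "a y - Re c *\<^sub>R (1::'a)"] by simp
    then show ?thesis using rho'[of x] rho'[of y] by simp
  qed
  have "cmod (\<mu> a - \<nu> a) \<le> 2 * \<rho> + min (2 * \<rho>) 0"
    by (rule core[OF cpt st ca sa _ rho' K, of 0]) simp_all
  moreover have "0 \<le> \<rho>" using rho[of undefined] norm_ge_zero order_trans by blast
  ultimately show ?thesis by simp
qed


lemma dist_le_diam:
  assumes "compact (UNIV :: 'x::metric_space set)"
  shows "dist (x::'x) y \<le> diam_X TYPE('x)"
proof -
  have "bounded (UNIV :: 'x set)" using assms compact_imp_bounded by blast
  then obtain e where e: "\<forall>x\<in>(UNIV::'x set). \<forall>y\<in>UNIV. dist x y \<le> e" unfolding bounded_two_points by blast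
  have "bdd_above (range (\<lambda>p::'x \<times> 'x. dist (fst p) (snd p)))"
    using e by (auto intro!: bdd_aboveI[where M = e])
  then have "dist (fst (x, y)) (snd (x, y)) \<le> (SUP p \<in> (UNIV :: ('x \<times> 'x) set). dist (fst p) (snd p))"
    by (rule cSUP_upper[OF UNIV_I])
  then show ?thesis unfolding diam_X_def by simp
qed

lemma lip_bound:
  fixes a :: "'x::metric_space \<Rightarrow> 'a::cstar_algebra"
  assumes cpt: "compact (UNIV :: 'x set)" and l: "lip_n nn a \<le> 1"
    and N: "\<And>v. norm v \<le> N * nn v" "N > 0"
  shows "norm (a x - a y) \<le> N * diam_X TYPE('x)"
proof (cases "x = y")
  case True
  have "0 \<le> diam_X TYPE('x)" using dist_le_diam[OF cpt, of x x] by simp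
  then show ?thesis using True N(2) by simp
next
  case False
  then have dpos: "dist x y > 0" by simp
  have "ereal (nn (a (fst (x, y)) - a (snd (x, y))) / dist (fst (x, y)) (snd (x, y))) \<le> lip_n nn a"
    unfolding lip_n_def by (rule SUP_upper) (use False in simp)
  then have "ereal (nn (a x - a y) / dist x y) \<le> 1" using l by (metis (no_types) fst_conv snd_conv order_trans)
  then have "nn (a x - a y) / dist x y \<le> 1" by simp
  then have "nn (a x - a y) \<le> dist x y" using dpos by (simp add: divide_le_eq)
  then have "N * nn (a x - a y) \<le> N * diam_X TYPE('x)"
    using dist_le_diam[OF cpt, of x y] N(2) by (simp add: mult_left_mono)
  then show ?thesis using N(1)[of "a x - a y"] by linarith
qed

lemma sup_bound:
  fixes L :: "('x::metric_space \<Rightarrow> 'a::cstar_algebra) \<Rightarrow> ereal"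
  assumes "\<And>\<mu> \<nu> a. is_state \<mu> \<Longrightarrow> is_state \<nu> \<Longrightarrow> continuous_on UNIV a \<Longrightarrow> (\<And>x. star (a x) = a x)
     \<Longrightarrow> L a \<le> 1 \<Longrightarrow> cmod (\<mu> a - \<nu> a) \<le> B"
  shows "(SUP \<mu>\<nu> \<in> {\<mu>::('x \<Rightarrow> 'a) \<Rightarrow> complex. is_state \<mu>} \<times> {\<nu>. is_state \<nu>}. mk L (fst \<mu>\<nu>) (snd \<mu>\<nu>)) \<le> ereal B"
proof (rule SUP_least)
  fix p :: "(('x \<Rightarrow> 'a) \<Rightarrow> complex) \<times> (('x \<Rightarrow> 'a) \<Rightarrow> complex)" assume p: "p \<in> {\<mu>::('x \<Rightarrow> 'a) \<Rightarrow> complex. is_state \<mu>} \<times> {\<nu>. is_state \<nu>}"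
  show "mk L (fst p) (snd p) \<le> ereal B"
    unfolding mk_def
  proof (rule SUP_least)
    fix a assume a: "a \<in> {a. continuous_on UNIV a \<and> fstar a = a \<and> L a \<le> 1}"
    have sa: "star (a x) = a x" for x using a by (auto simp: fstar_def fun_eq_iff)
    show "ereal (cmod (fst p (a) - snd p a)) \<le> ereal B"
      using assms[of "fst p" "snd p" a] p a sa by auto
  qed
qed

lemma zero_scalar: "(\<lambda>x. 0) \<in> (scalar_fun_set :: ('x::metric_space \<Rightarrow> 'a::cstar_algebra) set)"
proof -
  have "(0::'a) = cscale 0 1" using cscale_real[of 0 "1::'a"] by simp
  then show ?thesis unfolding scalar_fun_set_def by auto
qed

theorem proposition2p10:
  fixes \<phi> :: "('x::metric_space \<Rightarrow> 'a::cstar_algebra) \<Rightarrow> complex"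
    and nn :: "'a \<Rightarrow> real" and M N :: real
  assumes "compact (UNIV :: 'x set)"
    and "is_state \<phi>"
    and "is_norm_on nn"
    and "M > 0" and "N > 0"
    and "\<forall>a. M * nn a \<le> norm a \<and> norm a \<le> N * nn a"
  shows "((SUP \<mu>\<nu> \<in> {\<mu>::('x \<Rightarrow> 'a) \<Rightarrow> complex. is_state \<mu>} \<times> {\<nu>. is_state \<nu>}. mk (L_CX nn) (fst \<mu>\<nu>) (snd \<mu>\<nu>))
           \<le> ereal (2 + N * diam_X TYPE('x))) \<and>
         ((\<forall>a::'a. \<exists>c. a = cscale c 1) \<longrightarrow>
         (SUP \<mu>\<nu> \<in> {\<mu>::('x \<Rightarrow> 'a) \<Rightarrow> complex. is_state \<mu>} \<times> {\<nu>. is_state \<nu>}. mk (L_CX nn) (fst \<mu>\<nu>) (snd \<mu>\<nu>))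
           \<le> ereal (N * diam_X TYPE('x))) \<and>
         ((SUP \<mu>\<nu> \<in> {\<mu>::('x \<Rightarrow> 'a) \<Rightarrow> complex. is_state \<mu>} \<times> {\<nu>. is_state \<nu>}. mk (L_C nn) (fst \<mu>\<nu>) (snd \<mu>\<nu>))
           \<le> ereal 2) \<and>
         ((SUP \<mu>\<nu> \<in> {\<mu>::('x \<Rightarrow> 'a) \<Rightarrow> complex. is_state \<mu>} \<times> {\<nu>. is_state \<nu>}. mk (L_phi nn \<phi>) (fst \<mu>\<nu>) (snd \<mu>\<nu>))
           \<le> ereal 2)"
proof -
  note cpt = assms(1)
  define D where "D = diam_X TYPE('x)"
  have Nn: "\<And>v::'a. norm v \<le> N * nn v" using assms(6) by blast
  have lipK: "norm (a x - a y) \<le> N * D" if "lip_n nn a \<le> 1" for a :: "'x \<Rightarrow> 'a" and x y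
    unfolding D_def by (rule lip_bound[OF cpt that Nn assms(5)])
  have P1: "(SUP \<mu>\<nu> \<in> {\<mu>::('x \<Rightarrow> 'a) \<Rightarrow> complex. is_state \<mu>} \<times> {\<nu>. is_state \<nu>}. mk (L_CX nn) (fst \<mu>\<nu>) (snd \<mu>\<nu>))
           \<le> ereal (2 + N * D)"
  proof (rule sup_bound)
    fix \<mu> \<nu> :: "('x \<Rightarrow> 'a) \<Rightarrow> complex" and a :: "'x \<Rightarrow> 'a"
    assume st: "is_state \<mu>" "is_state \<nu>" and ca: "continuous_on UNIV a"
      and sa: "\<And>x. star (a x) = a x" and L: "L_CX nn a \<le> 1"
    define S where "S = (\<lambda>b. supnorm (\<lambda>x. a x - b x)) ` (scalar_fun_set :: ('x \<Rightarrow> 'a) set)"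
    have l1: "lip_n nn a \<le> 1" and i1: "ereal (Inf S) \<le> 1"
      using L unfolding L_CX_def S_def by auto
    have S0: "S \<noteq> {}" unfolding S_def using zero_scalar by blast
    show "cmod (\<mu> a - \<nu> a) \<le> 2 + N * D"
    proof (rule field_le_epsilon)
      fix e :: real assume e: "0 < e"
      have "Inf S < 1 + e / 2" using i1 e by simp
      then obtain s where "s \<in> S" "s < 1 + e / 2" using cInf_lessD[OF S0] by blast
      then obtain b where b: "b \<in> scalar_fun_set" and sb: "supnorm (\<lambda>x. a x - b x) < 1 + e / 2"
        unfolding S_def by blast
      have cb: "continuous_on UNIV b" using b by (simp add: scalar_fun_set_def)
      have rho: "norm (a x - b x) \<le> 1 + e / 2" for x
      proof -
        have "continuous_on UNIV (\<lambda>x. a x - b x)" using ca cb by (intro continuous_intros)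
        then show ?thesis using supnorm_ge[OF cpt, of "\<lambda>x. a x - b x" x] sb by linarith
      qed
      have "cmod (\<mu> a - \<nu> a) \<le> 2 * (1 + e / 2) + N * D"
        by (rule cx_core[OF cpt st ca sa b rho lipK[OF l1]])
      then show "cmod (\<mu> a - \<nu> a) \<le> 2 + N * D + e" by simp
    qed
  qed
  have P2: "(\<forall>a::'a. \<exists>c. a = cscale c 1) \<longrightarrow>
         (SUP \<mu>\<nu> \<in> {\<mu>::('x \<Rightarrow> 'a) \<Rightarrow> complex. is_state \<mu>} \<times> {\<nu>. is_state \<nu>}. mk (L_CX nn) (fst \<mu>\<nu>) (snd \<mu>\<nu>))
           \<le> ereal (N * D)"
  proof
    assume sc: "\<forall>a::'a. \<exists>c. a = cscale c 1"
    show "(SUP \<mu>\<nu> \<in> {\<mu>::('x \<Rightarrow> 'a) \<Rightarrow> complex. is_state \<mu>} \<times> {\<nu>. is_state \<nu>}. mk (L_CX nn) (fst \<mu>\<nu>) (snd \<mu>\<nu>))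
           \<le> ereal (N * D)"
    proof (rule sup_bound)
      fix \<mu> \<nu> :: "('x \<Rightarrow> 'a) \<Rightarrow> complex" and a :: "'x \<Rightarrow> 'a"
      assume st: "is_state \<mu>" "is_state \<nu>" and ca: "continuous_on UNIV a"
        and sa: "\<And>x. star (a x) = a x" and L: "L_CX nn a \<le> 1"
      have l1: "lip_n nn a \<le> 1" using L unfolding L_CX_def by auto
      have b: "a \<in> scalar_fun_set" unfolding scalar_fun_set_def using ca sc by blast
      have "cmod (\<mu> a - \<nu> a) \<le> 2 * 0 + N * D"
        by (rule cx_core[OF cpt st ca sa b _ lipK[OF l1]]) simp
      then show "cmod (\<mu> a - \<nu> a) \<le> N * D" by simp
    qed
  qed
  have P3: "(SUP \<mu>\<nu> \<in> {\<mu>::('x \<Rightarrow> 'a) \<Rightarrow> complex. is_state \<mu>} \<times> {\<nu>. is_state \<nu>}. mk (L_C nn) (fst \<mu>\<nu>) (snd \<mu>\<nu>))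
           \<le> ereal 2"
  proof (rule sup_bound)
    fix \<mu> \<nu> :: "('x \<Rightarrow> 'a) \<Rightarrow> complex" and a :: "'x \<Rightarrow> 'a"
    assume st: "is_state \<mu>" "is_state \<nu>" and ca: "continuous_on UNIV a"
      and sa: "\<And>x. star (a x) = a x" and L: "L_C nn a \<le> 1"
    define S where "S = (\<lambda>c. supnorm (\<lambda>x. a x - cscale c 1)) ` (UNIV :: complex set)"
    have i1: "ereal (Inf S) \<le> 1"
      using L unfolding L_C_def S_def by auto
    have S0: "S \<noteq> {}" unfolding S_def by blast
    show "cmod (\<mu> a - \<nu> a) \<le> 2"
    proof (rule field_le_epsilon)
      fix e :: real assume e: "0 < e"
      have "Inf S < 1 + e / 2" using i1 e by simp
      then obtain s where "s \<in> S" "s < 1 + e / 2" using cInf_lessD[OF S0] by blast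
      then obtain c where sb: "supnorm (\<lambda>x. a x - cscale c 1) < 1 + e / 2"
        unfolding S_def by blast
      have rho: "norm (a x - cscale c 1) \<le> 1 + e / 2" for x
      proof -
        have "continuous_on UNIV (\<lambda>x. a x - cscale c 1)" using ca by (intro continuous_intros)
        then show ?thesis using supnorm_ge[OF cpt, of "\<lambda>x. a x - cscale c 1" x] sb by linarith
      qed
      have "cmod (\<mu> a - \<nu> a) \<le> 2 * (1 + e / 2)"
        by (rule c_core[OF cpt st ca sa rho])
      then show "cmod (\<mu> a - \<nu> a) \<le> 2 + e" by simp
    qed
  qed
  have P4: "(SUP \<mu>\<nu> \<in> {\<mu>::('x \<Rightarrow> 'a) \<Rightarrow> complex. is_state \<mu>} \<times> {\<nu>. is_state \<nu>}. mk (L_phi nn \<phi>) (fst \<mu>\<nu>) (snd \<mu>\<nu>))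
           \<le> ereal 2"
  proof (rule sup_bound)
    fix \<mu> \<nu> :: "('x \<Rightarrow> 'a) \<Rightarrow> complex" and a :: "'x \<Rightarrow> 'a"
    assume st: "is_state \<mu>" "is_state \<nu>" and ca: "continuous_on UNIV a"
      and sa: "\<And>x. star (a x) = a x" and L: "L_phi nn \<phi> a \<le> 1"
    have i1: "supnorm (\<lambda>x. a x - cscale (\<phi> a) 1) \<le> 1"
      using L unfolding L_phi_def by auto
    have rho: "norm (a x - cscale (\<phi> a) 1) \<le> 1" for x
    proof -
      have "continuous_on UNIV (\<lambda>x. a x - cscale (\<phi> a) 1)" using ca by (intro continuous_intros)
      then show ?thesis using supnorm_ge[OF cpt, of "\<lambda>x. a x - cscale (\<phi> a) 1" x] i1 by linarith
    qed
    have "cmod (\<mu> a - \<nu> a) \<le> 2 * 1"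
      by (rule c_core[OF cpt st ca sa rho])
    then show "cmod (\<mu> a - \<nu> a) \<le> 2" by simp
  qed
  show ?thesis using P1 P2 P3 P4 unfolding D_def by blast
qed

end
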